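(* Let $\phi$ be a partial listing of $A$ and let $\alpha'=\alpha_k\cdots\alpha_{l+1}$ be a prefix of $A$ (with $2\le l+1\le k$). Then (1) $\alpha'$ is non-empty if and only if $\phi(\alpha'0\cdots0)=1$; and (2) $\alpha'$ is full if and only if $\phi(\alpha'(a_l-1)(a_{l-1}-1)\cdots(a_2-1))=1$.
   Context: Let $k\ge 2$ and let $a_k,\dots,a_2$ be positive integers with $a_2\le a_i$ for all $2<i\le k$. Let $A=[a_k]\times\cdots\times[a_2]$, where $[a]=\{0,\dots,a-1\}$; elements are written $\alpha=\alpha_k\alpha_{k-1}\cdots\alpha_2$. A prefix of $\alpha$ is $\alpha_k\cdots\alpha_{l+1}$ for some $2\le l+1\le k$; $\varnothing$ denotes the empty prefix; for a tuple $\beta=\alpha_k\cdots\alpha_{l+1}$ and $i$, $\beta i$ denotes $\alpha_k\cdots\alpha_{l+1}i$. An array $\phi:A\to\{0,1\}$ is initialized to $0$ everywhere. A tuple $\beta$ (a prefix or an element) is non-empty if some $\alpha\in A$ having $\beta$ as a prefix (or equal to $\beta$) has $\phi(\alpha)=1$, empty otherwise, and full if all such $\alpha$ have $\phi(\alpha)=1$. The procedure Next$(\beta)$, for $\beta=\alpha_k\cdots\alpha_{l+1}$ (with $l=k$ for $\beta=\varnothing$): let $m$ be the least $i$ such that $\beta i$ is empty; if $l=2$, set $\phi(\beta m):=1$ and stop; otherwise, if $m\ge a_2$, replace $m$ by the least $i$ such that $\beta i$ is not full; then call Next$(\beta m)$. A partial listing of $A$ is an array $\phi$ obtained from the all-zero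 array by finitely many calls of Next$(\varnothing)$. *)

theory Defs
  imports Main
begin

text \<open>Elements of A = [a_k] x ... x [a_2] are lists [alpha_k, ..., alpha_2] of length k-1;
  position j of the list holds coordinate k-j, bounded by a (k-j).
  An array phi is a function on lists (True means 1); only its values on A matter.\<close>

definition inA :: "(nat \<Rightarrow> nat) \<Rightarrow> nat \<Rightarrow> nat list \<Rightarrow> bool" where
  "inA a k xs \<longleftrightarrow> length xs = k - 1 \<and> (\<forall>j < k - 1. xs ! j < a (k - j))"

definition nonempty_tuple :: "(nat \<Rightarrow> nat) \<Rightarrow> nat \<Rightarrow> (nat list \<Rightarrow> bool) \<Rightarrow> nat list \<Rightarrow> bool" where
  "nonempty_tuple a k phi b \<longleftrightarrow> (\<exists>x. inA a k x \<and> take (length b) x = b \<and> phi x)"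

definition full_tuple :: "(nat \<Rightarrow> nat) \<Rightarrow> nat \<Rightarrow> (nat list \<Rightarrow> bool) \<Rightarrow> nat list \<Rightarrow> bool" where
  "full_tuple a k phi b \<longleftrightarrow> (\<forall>x. inA a k x \<and> take (length b) x = b \<longrightarrow> phi x)"

text \<open>next_call a k b phi phi': calling Next(b) on array phi terminates with array phi'.
  The level is l = k - length b. The least i with b i empty always exists (i \<ge> a_l is
  vacuously empty); the least i with b i not full is required to exist when it is used.\<close>

inductive next_call :: "(nat \<Rightarrow> nat) \<Rightarrow> nat \<Rightarrow> nat list \<Rightarrow> (nat list \<Rightarrow> bool) \<Rightarrow> (nat list \<Rightarrow> bool) \<Rightarrow> bool"
  for a :: "nat \<Rightarrow> nat" and k :: nat where
  base: "k - length b = 2 \<Longrightarrow>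
         m = (LEAST i. \<not> nonempty_tuple a k phi (b @ [i])) \<Longrightarrow>
         next_call a k b phi (phi((b @ [m]) := True))"
| step: "k - length b > 2 \<Longrightarrow>
         m0 = (LEAST i. \<not> nonempty_tuple a k phi (b @ [i])) \<Longrightarrow>
         (m0 \<ge> a 2 \<longrightarrow> (\<exists>i. \<not> full_tuple a k phi (b @ [i]))) \<Longrightarrow>
         m = (if m0 \<ge> a 2 then (LEAST i. \<not> full_tuple a k phi (b @ [i])) else m0) \<Longrightarrow>
         next_call a k (b @ [m]) phi phi' \<Longrightarrow>
         next_call a k b phi phi'"

definition partial_listing :: "(nat \<Rightarrow> nat) \<Rightarrow> nat \<Rightarrow> (nat list \<Rightarrow> bool) \<Rightarrow> bool" where
  "partial_listing a k phi \<longleftrightarrow> (next_call a k [])\<^sup>*\<^sup>* (\<lambda>_. False) phi"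

end

theory Submission
  imports Defs
begin

definition inR :: "(nat \<Rightarrow> nat) \<Rightarrow> nat \<Rightarrow> nat list \<Rightarrow> bool" where
  "inR a k c \<longleftrightarrow> (\<exists>x. inA a k x \<and> take (length c) x = c)"

lemma NE_upd: "nonempty_tuple a k phi c \<Longrightarrow> nonempty_tuple a k (phi(x:=True)) c"
  unfolding nonempty_tuple_def by (metis fun_upd_apply)

lemma FU_upd: "full_tuple a k phi c \<Longrightarrow> full_tuple a k (phi(x:=True)) c"
  unfolding full_tuple_def by (metis fun_upd_apply)

lemma NE_unch: "take (length c) x \<noteq> c \<Longrightarrow> nonempty_tuple a k (phi(x:=True)) c = nonempty_tuple a k phi c"
  unfolding nonempty_tuple_def by (metis fun_upd_apply)

lemma FU_unch: "take (length c) x \<noteq> c \<Longrightarrow> full_tuple a k (phi(x:=True)) c = full_tuple a k phi c"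
  unfolding full_tuple_def by (metis fun_upd_apply)

lemma notR: "\<not> inR a k c \<Longrightarrow> \<not> nonempty_tuple a k phi c \<and> full_tuple a k phi c"
  unfolding inR_def nonempty_tuple_def full_tuple_def by blast

lemma FU_NE: "full_tuple a k phi c \<Longrightarrow> inR a k c \<Longrightarrow> nonempty_tuple a k phi c"
  unfolding inR_def nonempty_tuple_def full_tuple_def by blast

lemma take_app1: "take (Suc (length c)) y = c @ [i] \<Longrightarrow> take (length c) y = c"
proof -
  assume h: "take (Suc (length c)) y = c @ [i]"
  have "take (length c) y = take (length c) (take (Suc (length c)) y)" by simp
  also have "\<dots> = c" using h by simp
  finally show ?thesis .
qed

lemma NE_parent: "nonempty_tuple a k phi (c @ [i]) \<Longrightarrow> nonempty_tuple a k phi c"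
proof -
  assume "nonempty_tuple a k phi (c @ [i])"
  then obtain x where x: "inA a k x" "take (Suc (length c)) x = c @ [i]" "phi x"
    unfolding nonempty_tuple_def by auto
  have "take (length c) x = c" by (rule take_app1[OF x(2)])
  then show ?thesis unfolding nonempty_tuple_def using x by blast
qed

lemma FU_child: "full_tuple a k phi c \<Longrightarrow> full_tuple a k phi (c @ [i])"
proof -
  assume h: "full_tuple a k phi c"
  show ?thesis unfolding full_tuple_def
  proof (intro allI impI)
    fix x assume x: "inA a k x \<and> take (length (c @ [i])) x = c @ [i]"
    then have "take (length c) x = c" using take_app1[of c x i] by simp
    then show "phi x" using h x unfolding full_tuple_def by blast
  qed
qed

lemma inR_parent: "inR a k (c @ [i]) \<Longrightarrow> inR a k c"
proof -
  assume "inR a k (c @ [i])"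
  then obtain x where x: "inA a k x" "take (Suc (length c)) x = c @ [i]"
    unfolding inR_def by auto
  have "take (length c) x = c" by (rule take_app1[OF x(2)])
  then show ?thesis unfolding inR_def using x by blast
qed

lemma take_app_len:
  assumes "take (Suc n) x = c @ [i]" "length c = n"
  shows "n < length x" "x ! n = i"
proof -
  have "length (take (Suc n) x) = Suc n" using assms by simp
  then show l: "n < length x" by simp
  have "x ! n = take (Suc n) x ! n" by simp
  also have "\<dots> = i" using assms by (simp add: nth_append)
  finally show "x ! n = i" .
qed

lemma inR_bound: "inR a k (c @ [i]) \<Longrightarrow> i < a (k - length c)"
proof -
  assume "inR a k (c @ [i])"
  then obtain x where x: "inA a k x" "take (Suc (length c)) x = c @ [i]" unfolding inR_def by auto
  have l: "length c < length x" and n: "x ! length c = i"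
    using take_app_len[OF x(2)] by auto
  have "length c < k - 1" using l x(1) unfolding inA_def by auto
  then show ?thesis using x(1) n unfolding inA_def by auto
qed

lemma inA_ext:
  assumes "inR a k c" "length c + length t = k - 1"
    and "\<forall>j < length t. t ! j < a (k - (length c + j))"
  shows "inA a k (c @ t)"
proof -
  obtain x where x: "inA a k x" "take (length c) x = c" using assms(1) unfolding inR_def by auto
  have lx: "length x = k - 1" using x(1) unfolding inA_def by auto
  show ?thesis unfolding inA_def
  proof (intro conjI allI impI)
    show "length (c @ t) = k - 1" using assms(2) by simp
    fix j assume j: "j < k - 1"
    show "(c @ t) ! j < a (k - j)"
    proof (cases "j < length c")
      case True
      then have "c ! j = x ! j" using x(2) by (metis nth_take)
      then show ?thesis using True x(1) j unfolding inA_def by (simp add: nth_append)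
    next
      case False
      then have "j - length c < length t" using j assms(2) by linarith
      then show ?thesis using assms(3) False by (auto simp: nth_append)
    qed
  qed
qed


lemma inR_ext:
  assumes pos: "\<forall>i \<in> {2..k}. a i > 0"
    and "inR a k c" "length c + 2 \<le> k" "i < a (k - length c)"
  shows "inR a k (c @ [i])"
proof -
  let ?t = "i # replicate (k - 2 - length c) 0"
  have "inA a k (c @ ?t)"
  proof (rule inA_ext[OF assms(2)])
    show "length c + length ?t = k - 1" using assms(3) by simp
    show "\<forall>j < length ?t. ?t ! j < a (k - (length c + j))"
    proof (intro allI impI)
      fix j assume j: "j < length ?t"
      show "?t ! j < a (k - (length c + j))"
      proof (cases j)
        case 0 then show ?thesis using assms(4) by simp
      next
        case (Suc j')
        then have "k - (length c + j) \<in> {2..k}" using j assms(3) by auto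
        then show ?thesis using pos Suc j by auto
      qed
    qed
  qed
  then show ?thesis unfolding inR_def by (intro exI[of _ "c @ ?t"]) simp
qed

lemma full_len:
  assumes "inR a k c" "length c = k - 1"
  shows "inA a k c \<and> (nonempty_tuple a k phi c \<longleftrightarrow> phi c) \<and> (full_tuple a k phi c \<longleftrightarrow> phi c)"
proof -
  obtain x where x: "inA a k x" "take (length c) x = c" using assms(1) unfolding inR_def by auto
  have "length x = k - 1" using x(1) unfolding inA_def by auto
  then have "x = c" using x(2) assms(2) by simp
  then have cA: "inA a k c" using x by simp
  have eq: "\<And>y. inA a k y \<Longrightarrow> take (length c) y = c \<longleftrightarrow> y = c"
    using assms(2) unfolding inA_def by auto
  show ?thesis using cA eq unfolding nonempty_tuple_def full_tuple_def by auto
qed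

lemma two_elems:
  assumes pos: "\<forall>i \<in> {2..k}. a i > 0"
    and R: "inR a k c" and len: "length c + 2 \<le> k"
    and ne: "\<not> nonempty_tuple a k phi c" and fu: "full_tuple a k (phi(x:=True)) c"
    and a2: "2 \<le> a 2"
  shows False
proof -
  let ?t1 = "replicate (k - 1 - length c) (0::nat)"
  let ?t2 = "replicate (k - 2 - length c) (0::nat) @ [1]"
  have A1: "inA a k (c @ ?t1)"
  proof (rule inA_ext[OF R])
    show "length c + length ?t1 = k - 1" using len by simp
    show "\<forall>j < length ?t1. ?t1 ! j < a (k - (length c + j))"
    proof (intro allI impI)
      fix j assume j: "j < length ?t1"
      then have "k - (length c + j) \<in> {2..k}" using len by auto
      then show "?t1 ! j < a (k - (length c + j))" using pos j by auto
    qed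
  qed
  have A2: "inA a k (c @ ?t2)"
  proof (rule inA_ext[OF R])
    show "length c + length ?t2 = k - 1" using len by simp
    show "\<forall>j < length ?t2. ?t2 ! j < a (k - (length c + j))"
    proof (intro allI impI)
      fix j assume j: "j < length ?t2"
      show "?t2 ! j < a (k - (length c + j))"
      proof (cases "j < k - 2 - length c")
        case True
        then have "k - (length c + j) \<in> {2..k}" using len by auto
        then show ?thesis using pos True by (auto simp: nth_append)
      next
        case False
        then have "j = k - 2 - length c" using j by simp
        moreover have "k - (length c + (k - 2 - length c)) = 2" using len by simp
        ultimately show ?thesis using a2 by (simp add: nth_append)
      qed
    qed
  qed
  have p1: "(phi(x:=True)) (c @ ?t1)" using fu A1 unfolding full_tuple_def by simp
  have p2: "(phi(x:=True)) (c @ ?t2)" using fu A2 unfolding full_tuple_def by simp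
  have n1: "\<not> phi (c @ ?t1)"
  proof
    assume "phi (c @ ?t1)"
    then have "nonempty_tuple a k phi c" unfolding nonempty_tuple_def using A1
      by (intro exI[of _ "c @ ?t1"]) simp
    with ne show False by simp
  qed
  have n2: "\<not> phi (c @ ?t2)"
  proof
    assume "phi (c @ ?t2)"
    then have "nonempty_tuple a k phi c" unfolding nonempty_tuple_def using A2
      by (intro exI[of _ "c @ ?t2"]) simp
    with ne show False by simp
  qed
  have e1: "c @ ?t1 = x" using p1 n1 by (cases "c @ ?t1 = x") auto
  have e2: "c @ ?t2 = x" using p2 n2 by (cases "c @ ?t2 = x") auto
  have "c @ ?t1 = c @ ?t2" using e1 e2 by simp
  then have eq: "?t1 = ?t2" by simp
  have h2: "(1::nat) \<in> set ?t2" by simp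
  have h1: "set ?t1 \<subseteq> {0}" by auto
  have "(1::nat) \<in> set ?t1" using h2 by (simp only: eq)
  then show False by simp
qed


definition Inv :: "(nat \<Rightarrow> nat) \<Rightarrow> nat \<Rightarrow> nat list \<Rightarrow> (nat list \<Rightarrow> bool) \<Rightarrow> bool" where
  "Inv a k b phi \<longleftrightarrow> (\<forall>\<beta> j. take (length b) \<beta> = b \<longrightarrow> inR a k \<beta> \<longrightarrow> length \<beta> + 2 \<le> k
      \<longrightarrow> Suc j < a (k - length \<beta>) \<longrightarrow>
      (nonempty_tuple a k phi (\<beta> @ [Suc j]) \<longrightarrow> nonempty_tuple a k phi (\<beta> @ [j])) \<and>
      (full_tuple a k phi (\<beta> @ [Suc j]) \<longrightarrow> full_tuple a k phi (\<beta> @ [j])))"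

lemma Inv_D: "Inv a k b phi \<Longrightarrow> take (length b) \<beta> = b \<Longrightarrow> inR a k \<beta> \<Longrightarrow> length \<beta> + 2 \<le> k
  \<Longrightarrow> Suc j < a (k - length \<beta>) \<Longrightarrow>
      (nonempty_tuple a k phi (\<beta> @ [Suc j]) \<longrightarrow> nonempty_tuple a k phi (\<beta> @ [j])) \<and>
      (full_tuple a k phi (\<beta> @ [Suc j]) \<longrightarrow> full_tuple a k phi (\<beta> @ [j]))"
  unfolding Inv_def by blast

lemma Inv_child: "Inv a k b phi \<Longrightarrow> Inv a k (b @ [i]) phi"
  unfolding Inv_def using take_app1 by (metis length_append_singleton)

lemma step_unch:
  assumes "take (Suc (length c)) x \<noteq> c @ [Suc j]"
    and "(nonempty_tuple a k phi (c @ [Suc j]) \<longrightarrow> nonempty_tuple a k phi (c @ [j])) \<and>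
      (full_tuple a k phi (c @ [Suc j]) \<longrightarrow> full_tuple a k phi (c @ [j]))"
  shows "(nonempty_tuple a k (phi(x:=True)) (c @ [Suc j]) \<longrightarrow> nonempty_tuple a k (phi(x:=True)) (c @ [j])) \<and>
      (full_tuple a k (phi(x:=True)) (c @ [Suc j]) \<longrightarrow> full_tuple a k (phi(x:=True)) (c @ [j]))"
proof -
  have u: "take (length (c @ [Suc j])) x \<noteq> c @ [Suc j]" using assms(1) by simp
  show ?thesis using NE_unch[OF u] FU_unch[OF u] assms(2) NE_upd FU_upd by metis
qed

lemma take_pre:
  assumes "take (Suc (length \<beta>)) x = \<beta> @ [s]" "n \<le> length \<beta>"
  shows "take n x = take n \<beta>"
proof -
  have "take n x = take n (take (Suc (length \<beta>)) x)" using assms(2) by simp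
  also have "\<dots> = take n (\<beta> @ [s])" using assms(1) by simp
  also have "\<dots> = take n \<beta>" using assms(2) by simp
  finally show ?thesis .
qed

lemma next_eff: "next_call a k b phi phi' \<Longrightarrow>
  \<exists>x. phi' = phi(x:=True) \<and> take (length b) x = b \<and> length b < length x"
proof (induction rule: next_call.induct)
  case (base b m phi)
  then show ?case by (intro exI[of _ "b @ [m]"]) simp
next
  case (step b m0 phi m phi')
  obtain x where x: "phi' = phi(x:=True)" "take (length (b @ [m])) x = b @ [m]"
    "length (b @ [m]) < length x" using step.IH by blast
  have x2: "take (Suc (length b)) x = b @ [m]" using x(2) by simp
  have "take (length b) x = b" by (rule take_app1[OF x2])
  then show ?case using x by (intro exI[of _ x]) simp
qed

lemma inR_nil:
  assumes pos: "\<forall>i \<in> {2..k}. a i > 0"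
  shows "inR a k []"
proof -
  have "inA a k (replicate (k - 1) 0)" unfolding inA_def
  proof (intro conjI allI impI)
    fix j assume "j < k - 1"
    then have "k - j \<in> {2..k}" by auto
    then show "replicate (k - 1) 0 ! j < a (k - j)" using pos \<open>j < k - 1\<close> by auto
  qed simp
  then show ?thesis unfolding inR_def by auto
qed


lemma beta_eq: "take (length b) \<beta> = b \<Longrightarrow> length \<beta> \<le> length b \<Longrightarrow> \<beta> = b"
  by (metis take_all)

lemma take_Suc_beta: "take (length b) \<beta> = b \<Longrightarrow> length b < length \<beta> \<Longrightarrow>
   take (Suc (length b)) \<beta> = b @ [\<beta> ! length b]"
  by (metis take_Suc_conv_app_nth)

lemma len_ge: "take (length b) \<beta> = b \<Longrightarrow> length b \<le> length \<beta>"
proof -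
  assume h: "take (length b) \<beta> = b"
  have "length (take (length b) \<beta>) = length b" using h by simp
  then show ?thesis by simp
qed

lemma next_inv:
  assumes "next_call a k b phi phi'"
    and pos: "\<forall>i \<in> {2..k}. a i > 0"
    and a2: "\<forall>i \<in> {3..k}. a 2 \<le> a i"
  shows "inR a k b \<Longrightarrow> Inv a k b phi \<Longrightarrow> Inv a k b phi'"
  using assms(1)
proof (induction rule: next_call.induct)
  case (base b m phi)
  let ?phi1 = "phi((b @ [m]) := True)"
  have hm: "\<And>i. i < m \<Longrightarrow> nonempty_tuple a k phi (b @ [i])"
    using base.hyps(2) not_less_Least by blast
  show ?case unfolding Inv_def
  proof (intro allI impI)
    fix \<beta> j assume H: "take (length b) \<beta> = b" "inR a k \<beta>" "length \<beta> + 2 \<le> k"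
      "Suc j < a (k - length \<beta>)"
    have "length \<beta> \<le> length b" using H(3) base.hyps(1) by linarith
    then have bb: "\<beta> = b" using beta_eq H(1) by blast
    show "(nonempty_tuple a k ?phi1 (\<beta> @ [Suc j]) \<longrightarrow> nonempty_tuple a k ?phi1 (\<beta> @ [j])) \<and>
      (full_tuple a k ?phi1 (\<beta> @ [Suc j]) \<longrightarrow> full_tuple a k ?phi1 (\<beta> @ [j]))"
    proof (cases "Suc j = m")
      case True
      have ne: "nonempty_tuple a k ?phi1 (b @ [j])" using hm True NE_upd by auto
      have R: "inR a k (b @ [j])" using inR_ext[OF pos base.prems(1)] H bb by simp
      have "length (b @ [j]) = k - 1" using base.hyps(1) by simp
      then have "full_tuple a k ?phi1 (b @ [j])" using full_len[OF R] ne by blast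
      then show ?thesis using ne bb by simp
    next
      case False
      have "take (Suc (length \<beta>)) (b @ [m]) \<noteq> \<beta> @ [Suc j]" using False bb by simp
      from step_unch[OF this Inv_D[OF base.prems(2) H(1) H(2) H(3) H(4)]]
      show ?thesis .
    qed
  qed
next
  case (step b m0 phi m phi')
  obtain x where x: "phi' = phi(x:=True)" "take (length (b @ [m])) x = b @ [m]"
    using next_eff[OF step.hyps(5)] by blast
  have x2: "take (Suc (length b)) x = b @ [m]" using x(2) by simp
  define L where "L = k - length b"
  have L3: "L \<in> {3..k}" using step.hyps(1) L_def by auto
  then have aL: "a 2 \<le> a L" using a2 by blast
  have lenb: "length b + 3 \<le> k" using step.hyps(1) by linarith
  have ex0: "\<not> nonempty_tuple a k phi (b @ [a L])"
    using notR inR_bound L_def by blast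
  have m0ne: "\<not> nonempty_tuple a k phi (b @ [m0])"
    using step.hyps(2) ex0 by (metis (mono_tags, lifting) LeastI)
  have m0lt: "\<And>i. i < m0 \<Longrightarrow> nonempty_tuple a k phi (b @ [i])"
    using step.hyps(2) not_less_Least by blast
  have caseA: "m0 < a 2 \<Longrightarrow> m = m0" using step.hyps(4) by simp
  have caseB1: "\<not> m0 < a 2 \<Longrightarrow> \<not> full_tuple a k phi (b @ [m])"
  proof -
    assume "\<not> m0 < a 2"
    then have "\<exists>i. \<not> full_tuple a k phi (b @ [i])" "m = (LEAST i. \<not> full_tuple a k phi (b @ [i]))"
      using step.hyps(3,4) by auto
    then show ?thesis by (metis (mono_tags, lifting) LeastI)
  qed
  have caseB2: "\<And>i. \<not> m0 < a 2 \<Longrightarrow> i < m \<Longrightarrow> full_tuple a k phi (b @ [i])"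
  proof -
    fix i assume "\<not> m0 < a 2" "i < m"
    then show "full_tuple a k phi (b @ [i])" using step.hyps(4) not_less_Least by fastforce
  qed
  have mlt: "m < a L"
  proof (cases "m0 < a 2")
    case True then show ?thesis using caseA aL by simp
  next
    case False
    then have "inR a k (b @ [m])" using caseB1 notR by blast
    then show ?thesis using inR_bound L_def by blast
  qed
  have Rm: "inR a k (b @ [m])" using inR_ext[OF pos step.prems(1)] lenb mlt L_def by simp
  have Invm: "Inv a k (b @ [m]) phi'" using step.IH[OF Rm Inv_child[OF step.prems(2)]] .
  show ?case unfolding Inv_def
  proof (intro allI impI)
    fix \<beta> j assume H: "take (length b) \<beta> = b" "inR a k \<beta>" "length \<beta> + 2 \<le> k"
      "Suc j < a (k - length \<beta>)"
    have old: "(nonempty_tuple a k phi (\<beta> @ [Suc j]) \<longrightarrow> nonempty_tuple a k phi (\<beta> @ [j])) \<and>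
      (full_tuple a k phi (\<beta> @ [Suc j]) \<longrightarrow> full_tuple a k phi (\<beta> @ [j]))"
      using Inv_D[OF step.prems(2) H] .
    show "(nonempty_tuple a k phi' (\<beta> @ [Suc j]) \<longrightarrow> nonempty_tuple a k phi' (\<beta> @ [j])) \<and>
      (full_tuple a k phi' (\<beta> @ [Suc j]) \<longrightarrow> full_tuple a k phi' (\<beta> @ [j]))"
    proof (cases "length \<beta> \<le> length b")
      case True
      then have bb: "\<beta> = b" using beta_eq H(1) by blast
      show ?thesis
      proof (cases "Suc j = m")
        case False
        have "take (Suc (length \<beta>)) x \<noteq> \<beta> @ [Suc j]" using False x2 bb by simp
        from step_unch[OF this old]
        show ?thesis using x(1) by simp
      next
        case True
        have jL: "j < a L" using mlt True by simp
        have Rj: "inR a k (b @ [j])" using inR_ext[OF pos step.prems(1)] lenb jL L_def by simp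
        show ?thesis
        proof (cases "m0 < a 2")
          case A: True
          have ne: "nonempty_tuple a k phi' (b @ [j])"
            using m0lt caseA[OF A] True NE_upd x(1) by auto
          have nf: "\<not> full_tuple a k phi' (b @ [m])"
          proof
            assume f: "full_tuple a k phi' (b @ [m])"
            have "2 \<le> a 2" using A caseA[OF A] True by linarith
            moreover have "length (b @ [m]) + 2 \<le> k" using lenb by simp
            ultimately show False
              using two_elems[OF pos Rm _ _ f[unfolded x(1)]] m0ne caseA[OF A] by blast
          qed
          show ?thesis using ne nf bb True by simp
        next
          case B: False
          have "full_tuple a k phi (b @ [j])" using caseB2[OF B] True by simp
          then have "nonempty_tuple a k phi (b @ [j])" "full_tuple a k phi (b @ [j])"
            using FU_NE Rj by auto
          then show ?thesis using NE_upd FU_upd x(1) bb by simp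
        qed
      qed
    next
      case False
      then have lt: "length b < length \<beta>" by simp
      define i where "i = \<beta> ! length b"
      have tb: "take (Suc (length b)) \<beta> = b @ [i]" using take_Suc_beta[OF H(1) lt] i_def by simp
      show ?thesis
      proof (cases "i = m")
        case True
        have "take (length (b @ [m])) \<beta> = b @ [m]" using tb True by simp
        from Inv_D[OF Invm this H(2) H(3) H(4)] show ?thesis .
      next
        case False
        have "take (Suc (length \<beta>)) x \<noteq> \<beta> @ [Suc j]"
        proof
          assume e: "take (Suc (length \<beta>)) x = \<beta> @ [Suc j]"
          have "take (Suc (length b)) x = take (Suc (length b)) \<beta>"
            using take_pre[OF e] lt by simp
          then show False using tb x2 False by simp
        qed
        from step_unch[OF this old] show ?thesis using x(1) by simp
      qed
    qed
  qed
qed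


lemma Inv_init:
  assumes pos: "\<forall>i \<in> {2..k}. a i > 0"
  shows "Inv a k [] (\<lambda>_. False)"
  unfolding Inv_def
proof (intro allI impI)
  fix \<beta> j assume H: "take (length []) \<beta> = []" "inR a k \<beta>" "length \<beta> + 2 \<le> k"
    "Suc j < a (k - length \<beta>)"
  have R: "inR a k (\<beta> @ [Suc j])" using inR_ext[OF pos H(2) H(3) H(4)] .
  have "\<not> nonempty_tuple a k (\<lambda>_. False) c" for c unfolding nonempty_tuple_def by simp
  then have "\<not> full_tuple a k (\<lambda>_. False) (\<beta> @ [Suc j])" using FU_NE R by blast
  then show "(nonempty_tuple a k (\<lambda>_. False) (\<beta> @ [Suc j]) \<longrightarrow> nonempty_tuple a k (\<lambda>_. False) (\<beta> @ [j])) \<and>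
      (full_tuple a k (\<lambda>_. False) (\<beta> @ [Suc j]) \<longrightarrow> full_tuple a k (\<lambda>_. False) (\<beta> @ [j]))"
    unfolding nonempty_tuple_def by simp
qed

lemma Inv_listing:
  assumes pos: "\<forall>i \<in> {2..k}. a i > 0"
    and a2: "\<forall>i \<in> {3..k}. a 2 \<le> a i"
    and "partial_listing a k phi"
  shows "Inv a k [] phi"
proof -
  have "(next_call a k [])\<^sup>*\<^sup>* (\<lambda>_. False) phi" using assms(3) unfolding partial_listing_def .
  then show ?thesis
  proof (induction rule: rtranclp_induct)
    case base then show ?case using Inv_init[OF pos] .
  next
    case (step y z)
    show ?case using next_inv[OF step.hyps(2) pos a2 inR_nil[OF pos] step.IH] .
  qed
qed

lemma down:
  assumes "\<And>j. Suc j < N \<Longrightarrow> P (Suc j) \<Longrightarrow> P j"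
  shows "P i \<Longrightarrow> i < N \<Longrightarrow> j \<le> i \<Longrightarrow> P j"
proof (induction i)
  case 0 then show ?case by simp
next
  case (Suc i)
  show ?case
  proof (cases "j = Suc i")
    case True then show ?thesis using Suc by simp
  next
    case False
    then have "j \<le> i" using Suc.prems by simp
    moreover have "P i" using assms Suc.prems by blast
    ultimately show ?thesis using Suc by simp
  qed
qed

lemma char:
  assumes pos: "\<forall>i \<in> {2..k}. a i > 0"
    and I: "Inv a k [] phi"
  shows "\<forall>b. inR a k b \<longrightarrow> length b + d = k - 1 \<longrightarrow>
    (nonempty_tuple a k phi b \<longleftrightarrow> phi (b @ replicate d 0)) \<and>
    (full_tuple a k phi b \<longleftrightarrow> phi (b @ map (\<lambda>i. a i - 1) (rev [2..<d + 2])))"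
proof (induction d)
  case 0
  show ?case
  proof (intro allI impI)
    fix b assume "inR a k b" "length b + 0 = k - 1"
    then show "(nonempty_tuple a k phi b \<longleftrightarrow> phi (b @ replicate 0 0)) \<and>
      (full_tuple a k phi b \<longleftrightarrow> phi (b @ map (\<lambda>i. a i - 1) (rev [2..<0 + 2])))"
      using full_len[of a k b phi] by simp
  qed
next
  case (Suc d)
  show ?case
  proof (intro allI impI)
    fix b assume R: "inR a k b" and len: "length b + Suc d = k - 1"
    define L where "L = k - length b"
    have L: "L = d + 2" using len L_def by simp
    have lb: "length b + 2 \<le> k" using len by simp
    have aL: "0 < a L" using pos L len by auto
    have Ib: "\<And>j. Suc j < a L \<Longrightarrow>
      (nonempty_tuple a k phi (b @ [Suc j]) \<longrightarrow> nonempty_tuple a k phi (b @ [j])) \<and>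
      (full_tuple a k phi (b @ [Suc j]) \<longrightarrow> full_tuple a k phi (b @ [j]))"
      using Inv_D[OF I _ R lb] L_def by simp
    have Ri: "\<And>i. i < a L \<Longrightarrow> inR a k (b @ [i])" using inR_ext[OF pos R lb] L_def by simp
    have lenc: "\<And>i. length (b @ [i]) + d = k - 1" using len by simp
    have IH0: "nonempty_tuple a k phi (b @ [0]) \<longleftrightarrow> phi ((b @ [0]) @ replicate d 0)"
      using Suc.IH Ri[OF aL] lenc by blast
    have IHm: "full_tuple a k phi (b @ [a L - 1]) \<longleftrightarrow>
        phi ((b @ [a L - 1]) @ map (\<lambda>i. a i - 1) (rev [2..<d + 2]))"
      using Suc.IH Ri[of "a L - 1"] aL lenc by auto
    have r1: "b @ replicate (Suc d) 0 = (b @ [0]) @ replicate d 0" by simp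
    have r2: "b @ map (\<lambda>i. a i - 1) (rev [2..<Suc d + 2]) =
       (b @ [a L - 1]) @ map (\<lambda>i. a i - 1) (rev [2..<d + 2])" using L by simp
    have split: "\<And>y. inA a k y \<Longrightarrow> take (length b) y = b \<Longrightarrow>
       y ! length b < a L \<and> take (Suc (length b)) y = b @ [y ! length b]"
    proof -
      fix y assume y: "inA a k y" "take (length b) y = b"
      have "length y = k - 1" using y(1) unfolding inA_def by simp
      then have lt: "length b < length y" using len by simp
      have t: "take (Suc (length b)) y = b @ [y ! length b]" using take_Suc_beta[OF y(2) lt] .
      then have "inR a k (b @ [y ! length b])" unfolding inR_def using y(1)
        by (intro exI[of _ y]) simp
      then show "y ! length b < a L \<and> take (Suc (length b)) y = b @ [y ! length b]"
        using inR_bound L_def t by blast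
    qed
    have NEeq: "nonempty_tuple a k phi b \<longleftrightarrow> nonempty_tuple a k phi (b @ [0])"
    proof
      assume "nonempty_tuple a k phi b"
      then obtain y where y: "inA a k y" "take (length b) y = b" "phi y"
        unfolding nonempty_tuple_def by auto
      define i where "i = y ! length b"
      have s: "i < a L" "take (Suc (length b)) y = b @ [i]" using split[OF y(1,2)] i_def by auto
      have "nonempty_tuple a k phi (b @ [i])" unfolding nonempty_tuple_def
        using y s by (intro exI[of _ y]) simp
      then show "nonempty_tuple a k phi (b @ [0])"
        using down[of "a L" "\<lambda>j. nonempty_tuple a k phi (b @ [j])" i 0] Ib s(1) by blast
    qed (rule NE_parent)
    have FUeq: "full_tuple a k phi b \<longleftrightarrow> full_tuple a k phi (b @ [a L - 1])"
    proof
      assume "full_tuple a k phi b" then show "full_tuple a k phi (b @ [a L - 1])" by (rule FU_child)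
    next
      assume f: "full_tuple a k phi (b @ [a L - 1])"
      have all: "\<And>i. i < a L \<Longrightarrow> full_tuple a k phi (b @ [i])"
        using down[of "a L" "\<lambda>j. full_tuple a k phi (b @ [j])" "a L - 1"] Ib f aL by fastforce
      show "full_tuple a k phi b" unfolding full_tuple_def
      proof (intro allI impI)
        fix y assume y: "inA a k y \<and> take (length b) y = b"
        then have s: "y ! length b < a L" "take (Suc (length b)) y = b @ [y ! length b]"
          using split by auto
        then show "phi y" using all[OF s(1)] y unfolding full_tuple_def by simp
      qed
    qed
    show "(nonempty_tuple a k phi b \<longleftrightarrow> phi (b @ replicate (Suc d) 0)) \<and>
      (full_tuple a k phi b \<longleftrightarrow> phi (b @ map (\<lambda>i. a i - 1) (rev [2..<Suc d + 2])))"
      using NEeq IH0 r1 FUeq IHm r2 by simp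
  qed
qed

theorem corollary1:
  fixes a :: "nat \<Rightarrow> nat" and k l :: nat and phi :: "nat list \<Rightarrow> bool" and b :: "nat list"
  assumes "k \<ge> 2"
    and "\<forall>i \<in> {2..k}. a i > 0"
    and "\<forall>i \<in> {3..k}. a 2 \<le> a i"
    and "partial_listing a k phi"
    and "2 \<le> l + 1" and "l + 1 \<le> k"
    and "\<exists>x. inA a k x \<and> take (k - l) x = b"
  shows "(nonempty_tuple a k phi b \<longleftrightarrow> phi (b @ replicate (l - 1) 0))
       \<and> (full_tuple a k phi b \<longleftrightarrow> phi (b @ map (\<lambda>i. a i - 1) (rev [2..<l + 1])))"
proof -
  obtain x where x: "inA a k x" "take (k - l) x = b" using assms(7) by blast
  have lx: "length x = k - 1" using x(1) unfolding inA_def by simp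
  have lb: "length b = k - l" using x(2) lx assms(5,6) by auto
  have R: "inR a k b" unfolding inR_def using x lb by auto
  have I: "Inv a k [] phi" using Inv_listing[OF assms(2,3,4)] .
  have "length b + (l - 1) = k - 1" using lb assms(5,6) by simp
  moreover have "l - 1 + 2 = l + 1" using assms(5) by simp
  ultimately show ?thesis using char[OF assms(2) I, of "l - 1"] R by auto
qed

end
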